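(* Let $q$ be a prime power, $M\geq 2$ an integer, and let $f_1,f_2\in\mathbb{F}_q[x]$ be monic irreducible polynomials (different from $x$) both of degree $n$ and both of exponent $e$. Then for every integer $l\geq 1$, $f_1(x^M)$ has a SRIM factor of degree $2l$ if and only if $f_2(x^M)$ has a SRIM factor of degree $2l$.
   Context: The exponent of a monic irreducible polynomial $f\in\mathbb{F}_q[x]$ with $f(0)\neq0$ is the multiplicative order of any of its roots in its splitting field. For a monic polynomial $f$ of degree $r$ with $f(0)\neq 0$, $f^*(x)=f(0)^{-1}x^rf(x^{-1})$; $f$ is self-reciprocal if $f=f^*$. A SRIM polynomial is a self-reciprocal irreducible monic polynomial. *)

theory Defs
  imports "HOL-Computational_Algebra.Computational_Algebra"
begin

text \<open>Exponent (order) of a polynomial f with f(0) \<noteq> 0: the least positive e with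
  f dividing x^e - 1. For irreducible f this is the multiplicative order of any root.\<close>
definition poly_exponent :: "'a::field poly \<Rightarrow> nat" where
  "poly_exponent f = (LEAST e. 0 < e \<and> f dvd (monom 1 e - 1))"

definition reciprocal_poly :: "'a::field poly \<Rightarrow> 'a poly" where
  "reciprocal_poly f = smult (inverse (coeff f 0)) (reflect_poly f)"

definition self_reciprocal :: "'a::field poly \<Rightarrow> bool" where
  "self_reciprocal f \<longleftrightarrow> lead_coeff f = 1 \<and> coeff f 0 \<noteq> 0 \<and> f = reciprocal_poly f"

definition srim :: "'a::field poly \<Rightarrow> bool" where
  "srim f \<longleftrightarrow> self_reciprocal f \<and> irreducible f \<and> lead_coeff f = 1"

end

theory Submission
  imports Defs "HOL-Algebra.Algebraic_Closure_Type" begin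
hide_const (open) Divisibility.irreducible Divisibility.prime up_ring.monom up_ring.coeff Module.module.smult Polynomials.degree Polynomials.lead_coeff

definition ev :: "'a::field poly \<Rightarrow> 'a alg_closure \<Rightarrow> 'a alg_closure" where
  "ev p x = poly (map_poly to_ac p) x"

lemma map_poly_to_ac_add: "map_poly to_ac (p + q) = map_poly to_ac p + map_poly to_ac q"
  by (rule poly_eqI) (simp add: coeff_map_poly)

lemma map_poly_to_ac_diff: "map_poly to_ac (p - q) = map_poly to_ac p - map_poly to_ac q"
  by (rule poly_eqI) (simp add: coeff_map_poly)

lemma map_poly_to_ac_mult: "map_poly to_ac (p * q) = map_poly to_ac p * map_poly to_ac q"
  by (rule poly_eqI) (simp add: coeff_map_poly coeff_mult to_ac_sum)

lemma ev_add [simp]: "ev (p + q) x = ev p x + ev q x"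
  by (simp add: ev_def map_poly_to_ac_add)
lemma ev_diff [simp]: "ev (p - q) x = ev p x - ev q x"
  by (simp add: ev_def map_poly_to_ac_diff)
lemma ev_mult [simp]: "ev (p * q) x = ev p x * ev q x"
  by (simp add: ev_def map_poly_to_ac_mult)
lemma ev_const [simp]: "ev [:c:] x = to_ac c"
  by (simp add: ev_def map_poly_pCons)
lemma ev_1 [simp]: "ev 1 x = 1"
  by (simp add: ev_def)
lemma ev_0 [simp]: "ev 0 x = 0"
  by (simp add: ev_def)
lemma ev_X [simp]: "ev [:0, 1:] x = x"
  by (simp add: ev_def map_poly_pCons)
lemma ev_monom [simp]: "ev (monom c n) x = to_ac c * x ^ n"
  by (simp add: ev_def map_poly_monom poly_monom)
lemma ev_smult [simp]: "ev (smult c p) x = to_ac c * ev p x"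
  by (simp add: ev_def map_poly_smult)
lemma ev_pCons: "ev (pCons a p) x = to_ac a + x * ev p x"
  by (simp add: ev_def map_poly_pCons)
lemma ev_pcompose [simp]: "ev (pcompose p q) x = ev p (ev q x)"
  by (induction p rule: pCons_induct) (simp_all add: pcompose_pCons ev_pCons)
lemma ev_coeff0: "ev p 0 = to_ac (coeff p 0)"
  by (simp add: ev_def poly_0_coeff_0 coeff_map_poly)
lemma degree_map_to_ac [simp]: "degree (map_poly to_ac p) = degree p"
  by (simp add: degree_map_poly)
lemma ev_dvd: "p dvd q \<Longrightarrow> ev p x = 0 \<Longrightarrow> ev q x = 0"
  unfolding dvd_def by auto
lemma ev_root_exists:
  fixes p :: "'a::field poly"
  assumes "degree p > 0" shows "\<exists>x. ev p x = 0"
  using alg_closed_imp_poly_has_root[of "map_poly to_ac p"] assms by (simp add: ev_def)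

lemma ev_reflect:
  assumes "x \<noteq> 0"
  shows "ev (reflect_poly p) x = x ^ degree p * ev p (inverse x)"
proof -
  have "map_poly to_ac (reflect_poly p) = reflect_poly (map_poly to_ac p)"
    by (rule poly_eqI) (simp add: coeff_map_poly coeff_reflect_poly)
  then show ?thesis using assms by (simp add: ev_def poly_reflect_poly_nz)
qed

lemma irr_deg:
  assumes "irreducible (f::'a::field poly)" shows "degree f > 0"
proof -
  have "f \<noteq> 0" "\<not> is_unit f" using assms irreducible_not_unit by auto
  then show ?thesis using is_unit_iff_degree by auto
qed

lemma ev_nonzero_const:
  assumes "degree h = 0" "h \<noteq> 0" shows "ev h a \<noteq> 0"
proof -
  obtain c where c: "h = [:c:]" using assms(1) degree_eq_zeroE by blast
  then have "c \<noteq> 0" using assms(2) by simp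
  then show ?thesis using c by simp
qed

lemma mp:
  fixes f p :: "'a::field poly"
  assumes "irreducible f" "ev f a = 0" "ev p a = 0" shows "f dvd p"
proof -
  define S where "S = {h::'a poly. h \<noteq> 0 \<and> ev h a = 0}"
  have fS: "f \<in> S" using assms by (auto simp: S_def)
  define d where "d = (LEAST n. \<exists>h\<in>S. degree h = n)"
  have "\<exists>h\<in>S. degree h = d" unfolding d_def by (rule LeastI[of _ "degree f"]) (use fS in auto)
  then obtain h where hS: "h \<in> S" and hd: "degree h = d" by blast
  have hmin: "degree h \<le> degree q" if "q \<in> S" for q
    unfolding hd d_def by (rule Least_le) (use that in auto)
  have h0: "h \<noteq> 0" and ha: "ev h a = 0" using hS by (auto simp: S_def)
  have hdeg: "degree h > 0" using ev_nonzero_const[of h a] h0 ha by auto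
  have hdvd: "h dvd q" if "ev q a = 0" for q
  proof (rule ccontr)
    assume "\<not> h dvd q"
    then have r0: "q mod h \<noteq> 0" by (simp add: dvd_eq_mod_eq_0)
    have "q mod h = q - (q div h) * h" by (simp add: minus_div_mult_eq_mod)
    then have "ev (q mod h) a = 0" using that ha by simp
    then have "q mod h \<in> S" using r0 by (simp add: S_def)
    then have "degree h \<le> degree (q mod h)" by (rule hmin)
    moreover have "degree (q mod h) < degree h" using r0 h0 degree_mod_less' by blast
    ultimately show False by simp
  qed
  have "h dvd f" using hdvd assms(2) by blast
  then obtain k where fk: "f = h * k" unfolding dvd_def by blast
  have nu: "\<not> is_unit h" using hdeg h0 by (simp add: is_unit_iff_degree)
  have "is_unit k" using Factorial_Ring.irreducibleD[OF assms(1) fk] nu by blast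
  then have "f dvd h" using fk by (simp add: mult_unit_dvd_iff)
  then show ?thesis using hdvd[OF assms(3)] dvd_trans by blast
qed

definition Pset :: "nat \<Rightarrow> 'a::zero poly set" where
  "Pset m = {p. \<forall>i\<ge>m. coeff p i = 0}"

lemma Pset_bij: "bij_betw (\<lambda>p. map (coeff p) [0..<m]) (Pset m :: 'a::zero poly set) {xs. set xs \<subseteq> UNIV \<and> length xs = m}"
proof (rule bij_betw_imageI)
  show "inj_on (\<lambda>p. map (coeff p) [0..<m]) (Pset m :: 'a poly set)"
  proof (rule inj_onI)
    fix p q assume p: "p \<in> Pset m" and q: "q \<in> Pset m" and eq: "map (coeff p) [0..<m] = map (coeff q) [0..<m]"
    show "p = q"
    proof (rule poly_eqI)
      fix i show "coeff p i = coeff q i"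
      proof (cases "i < m")
        case True
        then show ?thesis using arg_cong[OF eq, of "\<lambda>xs. xs ! i"] by simp
      next
        case False
        then show ?thesis using p q by (simp add: Pset_def)
      qed
    qed
  qed
  have "{xs. set xs \<subseteq> UNIV \<and> length xs = m} \<subseteq> (\<lambda>p. map (coeff p) [0..<m]) ` (Pset m :: 'a poly set)"
  proof
    fix xs :: "'a list" assume "xs \<in> {xs. set xs \<subseteq> UNIV \<and> length xs = m}"
    then have len: "length xs = m" by simp
    have "Poly xs \<in> Pset m" using len by (simp add: Pset_def nth_default_def)
    moreover have "map (coeff (Poly xs)) [0..<m] = xs"
      using len by (intro nth_equalityI) (auto simp: nth_default_def)
    ultimately show "xs \<in> (\<lambda>p. map (coeff p) [0..<m]) ` (Pset m :: 'a poly set)" by force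
  qed
  then show "(\<lambda>p. map (coeff p) [0..<m]) ` (Pset m :: 'a poly set) = {xs. set xs \<subseteq> UNIV \<and> length xs = m}"
    by auto
qed

lemma Pset_card: "card (Pset m :: 'a::{zero,finite} poly set) = card (UNIV::'a set) ^ m"
  using bij_betw_same_card[OF Pset_bij[where m=m and 'a='a]] card_lists_length_eq[of "UNIV::'a set" m] by simp

lemma Pset_finite: "finite (Pset m :: 'a::{zero,finite} poly set)"
  using bij_betw_finite[OF Pset_bij[where m=m and 'a='a]] finite_lists_length_eq[of "UNIV::'a set" m] by simp

lemma mod_in_Pset: "degree g > 0 \<Longrightarrow> (p::'a::field poly) mod g \<in> Pset (degree g)"
proof (cases "p mod g = 0")
  case False
  assume "degree g > 0"
  then have "g \<noteq> 0" by auto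
  then have "degree (p mod g) < degree g" using False degree_mod_less' by blast
  then show ?thesis unfolding Pset_def by (auto intro: coeff_eq_0)
qed (simp add: Pset_def)

lemma deg_in_Pset: "degree (p::'a::zero poly) \<le> d \<Longrightarrow> p \<in> Pset (Suc d)"
  unfolding Pset_def by (auto intro: coeff_eq_0)

lemma in_Pset_deg: "p \<in> Pset (Suc d) \<Longrightarrow> degree (p::'a::zero poly) \<le> d"
  unfolding Pset_def by (intro degree_le) auto

lemma nt_exists:
  fixes k e T :: nat
  assumes ke: "coprime k e" and T: "T > 0"
  shows "\<exists>k'. k' mod e = k mod e \<and> coprime k' T"
proof -
  define A where "A = {p \<in> prime_factors T. \<not> p dvd k}"
  define m where "m = \<Prod>A"
  have finA: "finite A" by (simp add: A_def)
  have Aprime: "\<And>p. p \<in> A \<Longrightarrow> prime p" by (auto simp: A_def)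
  define k' where "k' = k + e * m"
  have "coprime k' T"
  proof (rule ccontr)
    assume "\<not> coprime k' T"
    then have "gcd k' T \<noteq> 1" by (simp add: coprime_iff_gcd_eq_1)
    then obtain p where p: "prime p" "p dvd gcd k' T" using prime_factor_nat by blast
    then have pk': "p dvd k'" and pT: "p dvd T" by auto
    show False
    proof (cases "p dvd k")
      case True
      then have "\<not> p dvd e" using ke p(1)
        by (metis coprime_common_divisor_nat not_prime_1)
      moreover have "p dvd e * m" using pk' True by (simp add: k'_def dvd_add_right_iff)
      ultimately have "p dvd m" using p(1) prime_dvd_mult_iff by blast
      then obtain q where q: "q \<in> A" "p dvd q" using finA p(1) by (auto simp: m_def prime_dvd_prod_iff)
      then have "p = q" using p(1) Aprime primes_dvd_imp_eq by blast
      then show False using q True by (simp add: A_def)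
    next
      case False
      then have "p \<in> A" using pT p(1) T by (auto simp: A_def in_prime_factors_iff)
      then have "p dvd m" using dvd_prodI[OF finA, of p "\<lambda>x. x"] by (simp add: m_def)
      then have "p dvd e * m" by simp
      then have "p dvd k" using pk' by (simp add: k'_def dvd_add_left_iff)
      then show False using False by simp
    qed
  qed
  moreover have "k' mod e = k mod e" by (simp add: k'_def)
  ultimately show ?thesis by blast
qed

lemma inv_exists:
  fixes k' T :: nat
  assumes "coprime k' T" "T > 0"
  shows "\<exists>k''>0. (k' * k'') mod T = 1 mod T"
proof -
  show ?thesis
  proof (cases "k' = 0")
    case True
    then have "T = 1" using assms(1) by simp
    then show ?thesis by auto
  next
    case False
    then obtain x y where xy: "k' * x = T * y + gcd k' T" using bezout_nat by blast
    then have "k' * x = T * y + 1" using assms(1) by simp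
    then have "(k' * x) mod T = 1 mod T" by (metis add.commute mod_mult_self2 mult.commute)
    then have "(k' * (x + T)) mod T = 1 mod T" by (simp add: algebra_simps)
    then show ?thesis using assms(2) by (intro exI[of _ "x + T"]) auto
  qed
qed

lemma pow_mod_eq:
  fixes x :: "'a::comm_monoid_mult"
  assumes "x ^ T = 1" "a mod T = b mod T"
  shows "x ^ a = x ^ b"
proof -
  have "x ^ a = x ^ (T * (a div T) + a mod T)" by simp
  also have "\<dots> = x ^ (a mod T)" by (simp only: power_add power_mult assms(1) power_one mult_1)
  also have "\<dots> = x ^ (b mod T)" using assms(2) by simp
  also have "\<dots> = x ^ (T * (b div T) + b mod T)" by (simp only: power_add power_mult assms(1) power_one mult_1)
  also have "\<dots> = x ^ b" by simp
  finally show ?thesis .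
qed

lemma factor_root:
  fixes p :: "'a::field poly"
  assumes "p \<noteq> 0" "ev p a = 0"
  shows "\<exists>h. irreducible h \<and> lead_coeff h = 1 \<and> ev h a = 0"
proof -
  define S where "S = {h::'a poly. h \<noteq> 0 \<and> ev h a = 0}"
  have pS: "p \<in> S" using assms by (auto simp: S_def)
  define d where "d = (LEAST n. \<exists>h\<in>S. degree h = n)"
  have "\<exists>h\<in>S. degree h = d" unfolding d_def by (rule LeastI[of _ "degree p"]) (use pS in auto)
  then obtain h0 where h0S: "h0 \<in> S" and hd: "degree h0 = d" by blast
  have hmin0: "degree h0 \<le> degree q" if "q \<in> S" for q
    unfolding hd d_def by (rule Least_le) (use that in auto)
  have h00: "h0 \<noteq> 0" and ha0: "ev h0 a = 0" using h0S by (auto simp: S_def)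
  define h where "h = smult (inverse (lead_coeff h0)) h0"
  have lc: "lead_coeff h = 1" using h00 by (simp add: h_def lead_coeff_smult)
  have h0': "h \<noteq> 0" using h00 by (simp add: h_def)
  have ha: "ev h a = 0" using ha0 by (simp add: h_def)
  have hdeg_eq: "degree h = degree h0" using h00 by (simp add: h_def)
  have hmin: "degree h \<le> degree q" if "q \<in> S" for q using hmin0[OF that] hdeg_eq by simp
  have hdeg: "degree h > 0" using ev_nonzero_const[of h a] h0' ha by auto
  have "irreducible h"
  proof (rule Factorial_Ring.irreducibleI)
    show "h \<noteq> 0" by fact
    show "\<not> is_unit h" using hdeg h0' by (simp add: is_unit_iff_degree)
    fix x y assume hxy: "h = x * y"
    then have x0: "x \<noteq> 0" and y0: "y \<noteq> 0" using h0' by auto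
    have dsum: "degree h = degree x + degree y" using hxy x0 y0 degree_mult_eq by blast
    have "ev x a * ev y a = 0" using ha hxy by simp
    then have "ev x a = 0 \<or> ev y a = 0" by simp
    then show "is_unit x \<or> is_unit y"
    proof
      assume "ev x a = 0"
      then have "x \<in> S" using x0 by (simp add: S_def)
      then have "degree y = 0" using hmin[of x] dsum by linarith
      then show ?thesis using y0 by (simp add: is_unit_iff_degree)
    next
      assume "ev y a = 0"
      then have "y \<in> S" using y0 by (simp add: S_def)
      then have "degree x = 0" using hmin[of y] dsum by linarith
      then show ?thesis using x0 by (simp add: is_unit_iff_degree)
    qed
  qed
  then show ?thesis using lc ha by blast
qed

lemma root_nonzero:
  fixes f :: "'a::field poly"
  assumes "irreducible f" "lead_coeff f = 1" "f \<noteq> [:0, 1:]" "ev f \<alpha> = 0"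
  shows "\<alpha> \<noteq> 0"
proof
  assume a0: "\<alpha> = 0"
  have "f dvd [:0, 1:]" using mp[OF assms(1) assms(4)] a0 by simp
  then have "degree f \<le> degree [:0, 1::'a:]" by (rule dvd_imp_degree_le) simp
  then have "degree f \<le> 1" by simp
  moreover have "degree f > 0" using irr_deg assms(1) by blast
  ultimately have d1: "degree f = 1" by simp
  have c0: "coeff f 0 = 0" using assms(4) a0 by (simp add: ev_coeff0)
  have c1: "coeff f 1 = 1" using assms(2) d1 by simp
  have "f = [:0, 1:]"
  proof (rule poly_eqI)
    fix i show "coeff f i = coeff [:0, 1:] i"
    proof -
      consider "i = 0" | "i = 1" | "i \<ge> 2" by linarith
      then show ?thesis
      proof cases
        case 1 then show ?thesis using c0 by simp
      next
        case 2 then show ?thesis using c1 by simp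
      next
        case 3
        then have "coeff f i = 0" using d1 by (intro coeff_eq_0) simp
        moreover have "coeff [:0, 1::'a:] i = 0" using 3 by (intro coeff_eq_0) simp
        ultimately show ?thesis by simp
      qed
    qed
  qed
  then show False using assms(3) by simp
qed

lemma exp_char:
  fixes f :: "'a::field poly"
  assumes "irreducible f" "ev f \<alpha> = 0"
  shows "f dvd (monom 1 m - 1) \<longleftrightarrow> \<alpha> ^ m = 1"
proof
  assume "f dvd (monom 1 m - 1)"
  then have "ev (monom 1 m - 1) \<alpha> = 0" using ev_dvd assms(2) by blast
  then show "\<alpha> ^ m = 1" by simp
next
  assume "\<alpha> ^ m = 1"
  then have "ev (monom 1 m - 1) \<alpha> = 0" by simp
  then show "f dvd (monom 1 m - 1)" using mp assms by blast
qed

lemma exp_exists: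
  fixes f :: "'a::{field,finite} poly"
  assumes "irreducible f" "lead_coeff f = 1" "f \<noteq> [:0, 1:]" "ev f \<alpha> = 0"
  shows "\<exists>m>0. \<alpha> ^ m = 1"
proof -
  have an0: "\<alpha> \<noteq> 0" using root_nonzero assms by blast
  have dpos: "degree f > 0" using irr_deg assms(1) by blast
  define \<phi> where "\<phi> = (\<lambda>i::nat. (monom (1::'a) i) mod f)"
  have "\<phi> ` UNIV \<subseteq> Pset (degree f)" using mod_in_Pset[OF dpos] by (auto simp: \<phi>_def)
  then have "finite (\<phi> ` UNIV)" using Pset_finite finite_subset by blast
  then have "\<not> inj \<phi>"
  proof (intro notI)
    assume "finite (\<phi> ` UNIV)" "inj \<phi>"
    then have "finite (UNIV :: nat set)" using finite_imageD by blast
    then show False by simp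
  qed
  then obtain i j where ij: "i \<noteq> j" "\<phi> i = \<phi> j" unfolding inj_def by blast
  have key: "\<exists>m>0. \<alpha> ^ m = 1" if lt: "i < j" and eq: "\<phi> i = \<phi> j" for i j
  proof -
    have "f dvd monom 1 j - monom 1 i" using eq[symmetric] by (simp add: \<phi>_def mod_eq_dvd_iff)
    then have "ev (monom 1 j - monom 1 i) \<alpha> = 0" using ev_dvd assms(4) by blast
    then have e1: "\<alpha> ^ j = \<alpha> ^ i" by simp
    have "\<alpha> ^ j = \<alpha> ^ i * \<alpha> ^ (j - i)" using lt by (simp add: power_add[symmetric])
    then have "\<alpha> ^ i * \<alpha> ^ (j - i) = \<alpha> ^ i * 1" using e1 by simp
    then have "\<alpha> ^ (j - i) = 1" using an0 by simp
    then show ?thesis using lt by (intro exI[of _ "j - i"]) auto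
  qed
  show ?thesis
  proof (cases "i < j")
    case True then show ?thesis using key ij by blast
  next
    case False then have "j < i" using ij by simp
    then show ?thesis using key[of j i] ij(2) by simp
  qed
qed

lemma exp_props:
  fixes f :: "'a::{field,finite} poly"
  assumes "irreducible f" "lead_coeff f = 1" "f \<noteq> [:0, 1:]" "ev f \<alpha> = 0"
  shows "poly_exponent f > 0 \<and> \<alpha> ^ poly_exponent f = 1 \<and> (\<forall>m. 0 < m \<and> m < poly_exponent f \<longrightarrow> \<alpha> ^ m \<noteq> 1)"
proof -
  have eq: "poly_exponent f = (LEAST e. 0 < e \<and> \<alpha> ^ e = 1)"
    unfolding poly_exponent_def using exp_char[OF assms(1) assms(4)] by simp
  obtain m where m: "m > 0" "\<alpha> ^ m = 1" using exp_exists assms by blast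
  have "0 < poly_exponent f \<and> \<alpha> ^ poly_exponent f = 1"
    unfolding eq by (rule LeastI[of _ m]) (use m in auto)
  moreover have "\<alpha> ^ k \<noteq> 1" if "0 < k" "k < poly_exponent f" for k
    using not_less_Least[of k "\<lambda>e. 0 < e \<and> \<alpha> ^ e = 1"] that unfolding eq by auto
  ultimately show ?thesis by blast
qed

lemma root_count:
  fixes x y :: "'b::field"
  assumes e: "e > 0" and x: "x ^ e = 1" and xm: "\<forall>m. 0 < m \<and> m < e \<longrightarrow> x ^ m \<noteq> 1"
    and y: "y ^ e = 1"
  shows "\<exists>k<e. y = x ^ k"
proof -
  have x0: "x \<noteq> 0"
  proof
    assume "x = 0" then show False using x e by (simp add: zero_power)
  qed
  define P :: "'b poly" where "P = monom 1 e - 1"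
  have P0: "P \<noteq> 0"
  proof
    assume "P = 0"
    then have "coeff P e = 0" by simp
    then show False using e by (simp add: P_def coeff_monom)
  qed
  define R where "R = {z. poly P z = 0}"
  have finR: "finite R" using poly_roots_finite[OF P0] by (simp add: R_def)
  have "card R \<le> degree P" using card_poly_roots_bound[OF P0] by (simp add: R_def)
  also have "degree P \<le> e" unfolding P_def
    using degree_diff_le_max[of "monom (1::'b) e" 1] degree_monom_le[of "1::'b" e] by simp
  finally have cR: "card R \<le> e" .
  define A where "A = (\<lambda>i. x ^ i) ` {..<e}"
  have inj: "inj_on (\<lambda>i. x ^ i) {..<e}"
  proof (rule inj_onI)
    have aux: "i = j" if "i \<le> j" "j < e" "x ^ i = x ^ j" for i j
    proof (rule ccontr)
      assume "i \<noteq> j"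
      then have lt: "i < j" using that by simp
      have "x ^ j = x ^ i * x ^ (j - i)" using lt by (simp add: power_add[symmetric])
      then have "x ^ i * x ^ (j - i) = x ^ i * 1" using that by simp
      then have "x ^ (j - i) = 1" using x0 by simp
      then show False using xm lt that by auto
    qed
    fix i j assume "i \<in> {..<e}" "j \<in> {..<e}" "x ^ i = x ^ j"
    then show "i = j" using aux[of i j] aux[of j i] by (cases "i \<le> j") auto
  qed
  have cA: "card A = e" using inj by (simp add: A_def card_image)
  have AR: "A \<subseteq> R"
  proof
    fix z assume "z \<in> A"
    then obtain i where "z = x ^ i" by (auto simp: A_def)
    then have "z ^ e = 1" using x by (simp add: power_mult[symmetric] mult.commute power_mult)
    then show "z \<in> R" by (simp add: R_def P_def poly_monom)
  qed
  have "card A = card R" using cA cR card_mono[OF finR AR] by simp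
  then have "A = R" using card_subset_eq[OF finR AR] by simp
  moreover have "y \<in> R" using y by (simp add: R_def P_def poly_monom)
  ultimately show ?thesis by (auto simp: A_def)
qed

lemma coprime_k:
  fixes x :: "'b::field"
  assumes e: "e > 0" and x: "x ^ e = 1"
    and ym: "\<forall>m. 0 < m \<and> m < e \<longrightarrow> (x ^ k) ^ m \<noteq> 1"
  shows "coprime k e"
proof (rule ccontr)
  assume nc: "\<not> coprime k e"
  define d where "d = gcd k e"
  have d1: "d \<noteq> 1" using nc by (simp add: d_def coprime_iff_gcd_eq_1)
  have dpos: "d > 0" using e by (simp add: d_def)
  obtain k1 where k1: "k = d * k1" using gcd_dvd1[of k e] unfolding d_def dvd_def by blast
  obtain e1 where e1: "e = d * e1" using gcd_dvd2[of k e] unfolding d_def dvd_def by blast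
  have e1pos: "e1 > 0" using e e1 by simp
  have d2: "d \<ge> 2" using d1 dpos by simp
  have "e1 * 2 \<le> e1 * d" using d2 by simp
  then have e1lt: "e1 < e" using e1 e1pos by (simp add: mult.commute)
  have "(x ^ k) ^ e1 = (x ^ e) ^ k1" using k1 e1 by (simp add: power_mult[symmetric] algebra_simps)
  also have "\<dots> = 1" using x by simp
  finally show False using ym e1pos e1lt by blast
qed

lemma deg_le:
  fixes G F :: "'a::{field,finite} poly"
  assumes G: "irreducible G" "ev G \<gamma> = 0" and F: "irreducible F" "ev F (\<gamma> ^ k) = 0"
  shows "degree F \<le> degree G"
proof -
  define d where "d = degree G"
  have dpos: "d > 0" using irr_deg G(1) by (simp add: d_def)
  define q where "q = card (UNIV :: 'a set)"
  have "card {0::'a, 1} \<le> q" unfolding q_def by (rule card_mono) auto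
  then have q2: "q \<ge> 2" by simp
  define \<phi> where "\<phi> = (\<lambda>h. pcompose h (monom 1 k) mod G)"
  have im: "\<phi> ` Pset (Suc d) \<subseteq> Pset d" using mod_in_Pset[of G] dpos by (auto simp: \<phi>_def d_def)
  have "\<not> inj_on \<phi> (Pset (Suc d))"
  proof
    assume "inj_on \<phi> (Pset (Suc d))"
    then have "card (\<phi> ` Pset (Suc d)) = q ^ Suc d" by (simp add: card_image Pset_card q_def)
    moreover have "card (\<phi> ` Pset (Suc d)) \<le> q ^ d"
      using card_mono[OF Pset_finite im] by (simp add: Pset_card q_def)
    moreover have "q ^ d < q ^ Suc d" using q2 by simp
    ultimately show False by simp
  qed
  then obtain h1 h2 where h12: "h1 \<in> Pset (Suc d)" "h2 \<in> Pset (Suc d)" "h1 \<noteq> h2" "\<phi> h1 = \<phi> h2"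
    unfolding inj_on_def by blast
  define h where "h = h1 - h2"
  have h0: "h \<noteq> 0" using h12 by (simp add: h_def)
  have hdeg: "degree h \<le> d"
    using in_Pset_deg[OF h12(1)] in_Pset_deg[OF h12(2)] degree_diff_le_max[of h1 h2] by (simp add: h_def)
  have "G dvd pcompose h1 (monom 1 k) - pcompose h2 (monom 1 k)"
    using h12(4) by (simp add: \<phi>_def mod_eq_dvd_iff)
  then have "G dvd pcompose h (monom 1 k)" by (simp add: h_def pcompose_diff)
  then have "ev (pcompose h (monom 1 k)) \<gamma> = 0" using ev_dvd G(2) by blast
  then have "ev h (\<gamma> ^ k) = 0" by simp
  then have "F dvd h" using mp F by blast
  then have "degree F \<le> degree h" using h0 dvd_imp_degree_le by blast
  then show ?thesis using hdeg by (simp add: d_def)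
qed

lemma rec_eq:
  fixes F :: "'a::field poly"
  assumes "lead_coeff F = 1" "coeff F 0 \<noteq> 0" "F dvd reflect_poly F"
  shows "F = reciprocal_poly F"
proof -
  obtain k where k: "reflect_poly F = F * k" using assms(3) unfolding dvd_def by blast
  have F0: "F \<noteq> 0" using assms(1) by auto
  have "coeff (reflect_poly F) 0 = 1" using assms(1) by simp
  then have R0: "reflect_poly F \<noteq> 0" by auto
  then have k0: "k \<noteq> 0" using k by auto
  have "degree (reflect_poly F) = degree F" using assms(2) by simp
  then have "degree k = 0" using k F0 k0 degree_mult_eq by fastforce
  then obtain c where c: "k = [:c:]" using degree_eq_zeroE by blast
  have "lead_coeff (reflect_poly F) = coeff F 0"
    using assms(2) by (simp add: coeff_reflect_poly)
  moreover have "lead_coeff (F * k) = c" using assms(1) c by (simp add: lead_coeff_mult)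
  ultimately have "c = coeff F 0" using k by simp
  then have "reflect_poly F = smult (coeff F 0) F" using k c by simp
  then show ?thesis using assms(2) by (simp add: reciprocal_poly_def)
qed


lemma main_dir:
  fixes f1 f2 g :: "'a::{field,finite} poly" and M :: nat
  assumes M: "M \<ge> 1"
    and f1: "lead_coeff f1 = 1" "irreducible f1" "f1 \<noteq> [:0, 1:]"
    and f2: "lead_coeff f2 = 1" "irreducible f2" "f2 \<noteq> [:0, 1:]"
    and ex: "poly_exponent f1 = poly_exponent f2"
    and g: "srim g" "g dvd pcompose f1 (monom 1 M)"
  shows "\<exists>g'. srim g' \<and> degree g' = degree g \<and> g' dvd pcompose f2 (monom 1 M)"
proof -
  have girr: "irreducible g" and gmon: "lead_coeff g = 1" and g0: "coeff g 0 \<noteq> 0"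
    and grec: "g = reciprocal_poly g"
    using g(1) by (auto simp: srim_def self_reciprocal_def)
  obtain \<beta> where gb: "ev g \<beta> = 0" using ev_root_exists irr_deg[OF girr] by blast
  define \<alpha>1 where "\<alpha>1 = \<beta> ^ M"
  have "ev (pcompose f1 (monom 1 M)) \<beta> = 0" using ev_dvd[OF g(2) gb] .
  then have f1a: "ev f1 \<alpha>1 = 0" by (simp add: \<alpha>1_def)
  obtain \<alpha>2 where f2a: "ev f2 \<alpha>2 = 0" using ev_root_exists irr_deg[OF f2(2)] by blast
  define e where "e = poly_exponent f1"
  have P1: "e > 0 \<and> \<alpha>1 ^ e = 1 \<and> (\<forall>m. 0 < m \<and> m < e \<longrightarrow> \<alpha>1 ^ m \<noteq> 1)"
    using exp_props[OF f1(2) f1(1) f1(3) f1a] by (simp add: e_def)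
  have P2: "e > 0 \<and> \<alpha>2 ^ e = 1 \<and> (\<forall>m. 0 < m \<and> m < e \<longrightarrow> \<alpha>2 ^ m \<noteq> 1)"
    using exp_props[OF f2(2) f2(1) f2(3) f2a] by (simp add: e_def ex)
  have epos: "e > 0" and a1e: "\<alpha>1 ^ e = 1" and a1m: "\<forall>m. 0 < m \<and> m < e \<longrightarrow> \<alpha>1 ^ m \<noteq> 1"
    using P1 by auto
  have a2e: "\<alpha>2 ^ e = 1" and a2m: "\<forall>m. 0 < m \<and> m < e \<longrightarrow> \<alpha>2 ^ m \<noteq> 1"
    using P2 by auto
  obtain k where k: "k < e" "\<alpha>2 = \<alpha>1 ^ k" using root_count[OF epos a1e a1m a2e] by blast
  have ke: "coprime k e" using coprime_k[OF epos a1e] a2m k(2) by simp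
  define T where "T = M * e"
  have Tpos: "T > 0" using M epos by (simp add: T_def)
  have bT: "\<beta> ^ T = 1" using a1e by (simp add: T_def \<alpha>1_def power_mult)
  obtain k' where k': "k' mod e = k mod e" "coprime k' T" using nt_exists[OF ke Tpos] by blast
  obtain k'' where k'': "k'' > 0" "(k' * k'') mod T = 1 mod T" using inv_exists[OF k'(2) Tpos] by blast
  define \<beta>' where "\<beta>' = \<beta> ^ k'"
  have bb: "\<beta>' ^ k'' = \<beta>"
  proof -
    have "\<beta>' ^ k'' = \<beta> ^ (k' * k'')" by (simp add: \<beta>'_def power_mult)
    also have "\<dots> = \<beta> ^ 1" by (rule pow_mod_eq[OF bT k''(2)])
    finally show ?thesis by simp
  qed
  have b'M: "\<beta>' ^ M = \<alpha>2"
  proof -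
    have "\<beta>' ^ M = \<alpha>1 ^ k'" by (simp add: \<beta>'_def \<alpha>1_def power_mult[symmetric] mult.commute)
    also have "\<dots> = \<alpha>1 ^ k" by (rule pow_mod_eq[OF a1e k'(1)])
    finally show ?thesis using k(2) by simp
  qed
  have bnz: "\<beta> \<noteq> 0"
  proof
    assume "\<beta> = 0" then show False using bT Tpos by (simp add: zero_power)
  qed
  have b'nz: "\<beta>' \<noteq> 0" using bnz by (simp add: \<beta>'_def)
  define P where "P = pcompose g (monom 1 k'')"
  have "degree P = degree g * k''" by (simp add: P_def degree_pcompose degree_monom_eq)
  then have P0: "P \<noteq> 0" using irr_deg[OF girr] k''(1) by auto
  have Pb: "ev P \<beta>' = 0" using gb bb by (simp add: P_def)
  obtain g' where g': "irreducible g'" "lead_coeff g' = 1" "ev g' \<beta>' = 0"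
    using factor_root[OF P0 Pb] by blast
  have d1: "degree g' \<le> degree g" using deg_le[OF girr gb g'(1)] g'(3) by (simp add: \<beta>'_def)
  have d2: "degree g \<le> degree g'" using deg_le[OF g'(1) g'(3) girr, of k''] gb bb by simp
  have dv: "g' dvd pcompose f2 (monom 1 M)" using mp[OF g'(1) g'(3)] f2a b'M by simp
  have c0: "coeff g' 0 \<noteq> 0"
  proof
    assume "coeff g' 0 = 0"
    then have "ev g' 0 = 0" by (simp add: ev_coeff0)
    then have "g' dvd [:0, 1:]" using mp[OF g'(1)] by simp
    then have "ev [:0, 1:] \<beta>' = 0" using ev_dvd g'(3) by blast
    then show False using b'nz by simp
  qed
  have ginv: "ev g (inverse \<beta>) = 0"
  proof -
    have "ev g (inverse \<beta>) = ev (reciprocal_poly g) (inverse \<beta>)"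
      using arg_cong[OF grec, of "\<lambda>p. ev p (inverse \<beta>)"] by simp
    also have "\<dots> = to_ac (inverse (coeff g 0)) * ev (reflect_poly g) (inverse \<beta>)"
      by (simp add: reciprocal_poly_def)
    also have "ev (reflect_poly g) (inverse \<beta>) = inverse \<beta> ^ degree g * ev g (inverse (inverse \<beta>))"
      using bnz by (intro ev_reflect) simp
    also have "\<dots> = 0" using gb by simp
    finally show ?thesis by simp
  qed
  have gdv: "g dvd pcompose g' (monom 1 k')" using mp[OF girr gb] g'(3) by (simp add: \<beta>'_def)
  have "ev (pcompose g' (monom 1 k')) (inverse \<beta>) = 0" using ev_dvd[OF gdv ginv] .
  then have gi': "ev g' (inverse \<beta>') = 0" by (simp add: \<beta>'_def power_inverse)
  have "ev (reflect_poly g') \<beta>' = 0" using ev_reflect[OF b'nz, of g'] gi' by simp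
  then have "g' dvd reflect_poly g'" using mp[OF g'(1) g'(3)] by simp
  then have rec: "g' = reciprocal_poly g'" using rec_eq[OF g'(2) c0] by simp
  have "srim g'" using g'(1) g'(2) c0 rec by (simp add: srim_def self_reciprocal_def)
  then show ?thesis using d1 d2 dv by (intro exI[of _ g']) auto
qed

theorem lemma4p17:
  fixes f1 f2 :: "'a::{field,finite} poly" and M n e l :: nat
  assumes "M \<ge> 2"
    and "lead_coeff f1 = 1" and "irreducible f1" and "f1 \<noteq> [:0, 1:]"
    and "lead_coeff f2 = 1" and "irreducible f2" and "f2 \<noteq> [:0, 1:]"
    and "degree f1 = n" and "degree f2 = n"
    and "poly_exponent f1 = e" and "poly_exponent f2 = e"
    and "l \<ge> 1"
  shows "(\<exists>g. srim g \<and> degree g = 2 * l \<and> g dvd pcompose f1 (monom 1 M)) \<longleftrightarrow>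
         (\<exists>g. srim g \<and> degree g = 2 * l \<and> g dvd pcompose f2 (monom 1 M))"
proof -
  have M1: "M \<ge> 1" using assms(1) by simp
  have ex: "poly_exponent f1 = poly_exponent f2" using assms(10,11) by simp
  show ?thesis
  proof
    assume "\<exists>g. srim g \<and> degree g = 2 * l \<and> g dvd pcompose f1 (monom 1 M)"
    then obtain g where g: "srim g" "degree g = 2 * l" "g dvd pcompose f1 (monom 1 M)" by blast
    obtain g' where "srim g'" "degree g' = degree g" "g' dvd pcompose f2 (monom 1 M)"
      using main_dir[OF M1 assms(2,3,4) assms(5,6,7) ex g(1) g(3)] by blast
    then show "\<exists>g. srim g \<and> degree g = 2 * l \<and> g dvd pcompose f2 (monom 1 M)" using g(2) by auto
  next
    assume "\<exists>g. srim g \<and> degree g = 2 * l \<and> g dvd pcompose f2 (monom 1 M)"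
    then obtain g where g: "srim g" "degree g = 2 * l" "g dvd pcompose f2 (monom 1 M)" by blast
    obtain g' where "srim g'" "degree g' = degree g" "g' dvd pcompose f1 (monom 1 M)"
      using main_dir[OF M1 assms(5,6,7) assms(2,3,4) ex[symmetric] g(1) g(3)] by blast
    then show "\<exists>g. srim g \<and> degree g = 2 * l \<and> g dvd pcompose f1 (monom 1 M)" using g(2) by auto
  qed
qed

end
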